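(* Let $f$ be a scale mixture of normals (SMN) density with shape parameter $\delta\in\Delta\subset\mathbb{R}$, i.e. $f(z\mid\delta)=\int_{\mathbb{R}_+}\tau^{1/2}\phi(\tau^{1/2}z)\,dH(\tau\mid\delta)$, where $\phi$ is the standard normal density and $H(\cdot\mid\delta)$ is a mixing distribution on $\mathbb{R}_+$. Consider the linear regression model $y_j={\bf x}_j^{\top}\bm\beta+\varepsilon_j$, $j=1,\dots,n$, where $\bm\beta\in\mathbb{R}^p$, ${\bf X}=({\bf x}_1^\top,\dots,{\bf x}_n^\top)^\top$ is a known $n\times p$ design matrix of full column rank, and $\varepsilon_j\stackrel{i.i.d.}{\sim}\mathrm{TP}(0,\sigma,\delta,\gamma;f)$. Adopt the prior $\pi(\bm\beta,\sigma,\delta,\gamma)\propto \pi(\gamma)\pi(\delta)/\sigma^{q}$ with $q\ge 0$ and $\pi(\gamma)$, $\pi(\delta)$ proper priors on $\Gamma$ and $\Delta$. Consider the conditions: (i) the posterior of $(\bm\beta,\sigma,\delta)$ associated with the linear regression model $y_j={\bf x}_j^\top\bm\beta+\varepsilon_j$ with errors $\varepsilon_j$ i.i.d. with symmetric density $\sigma^{-1}f(\cdot/\sigma\mid\delta)$, together with the prior $\pi(\bm\beta,\sigma,\delta)\propto\sigma^{-q}\pi(\delta)$, is proper; (ii) $\int_{\Gamma}\frac{h(\gamma)^{n+q-1}}{[a(\gamma)+b(\gamma)]^n}\pi(\gamma)\,d\gamma<\infty$, where $h(\gamma)=\min\{a(\gamma),b(\gamma)\}$; (iii) $\int_{\Gamma}\frac{H(\gamma)^{n+q-1}}{[a(\gamma)+b(\gamma)]^n}\pi(\gamma)\,d\gamma<\infty$,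 where $H(\gamma)=\max\{a(\gamma),b(\gamma)\}$. Then (i) and (ii) are necessary conditions, and (i) and (iii) are sufficient conditions, for the propriety of the posterior distribution of $(\bm\beta,\sigma,\delta,\gamma)$.
   Context: The two-piece distribution $\mathrm{TP}(\mu,\sigma,\delta,\gamma;f)$, for a symmetric density $f(\cdot\mid\delta)$ on $\mathbb{R}$ with mode at $0$, has density $g(z\mid\mu,\sigma,\delta,\gamma)=\frac{2}{\sigma[a(\gamma)+b(\gamma)]}\left[f\!\left(\frac{z-\mu}{\sigma b(\gamma)}\Big|\delta\right)I(z<\mu)+f\!\left(\frac{z-\mu}{\sigma a(\gamma)}\Big|\delta\right)I(z\ge\mu)\right]$, $z\in\mathbb{R}$, where $\mu\in\mathbb{R}$, $\sigma>0$, $\gamma\in\Gamma\subset\mathbb{R}$ is a skewness parameter and $a(\cdot),b(\cdot)$ are given positive functions on $\Gamma$. The likelihood is $\prod_{j=1}^n g(y_j-{\bf x}_j^\top\bm\beta\mid 0,\sigma,\delta,\gamma)$, and the posterior is the (possibly improper) product of likelihood and prior; "proper" means that this product has finite integral over the parameter space. *)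

theory Defs
  imports "HOL-Probability.Probability"
begin

definition smn_density :: "(real \<Rightarrow> real measure) \<Rightarrow> real \<Rightarrow> real \<Rightarrow> ennreal" where
  "smn_density H z \<delta> = (\<integral>\<^sup>+ \<tau>. ennreal (sqrt \<tau> * std_normal_density (sqrt \<tau> * z)) \<partial>(H \<delta>))"

definition tp_density ::
  "(real \<Rightarrow> real \<Rightarrow> ennreal) \<Rightarrow> (real \<Rightarrow> real) \<Rightarrow> (real \<Rightarrow> real) \<Rightarrow>
   real \<Rightarrow> real \<Rightarrow> real \<Rightarrow> real \<Rightarrow> real \<Rightarrow> ennreal" where
  "tp_density f a b \<mu> \<sigma> \<delta> \<gamma> z =
     ennreal (2 / (\<sigma> * (a \<gamma> + b \<gamma>))) *
     (if z < \<mu> then f ((z - \<mu>) / (\<sigma> * b \<gamma>)) \<delta> else f ((z - \<mu>) / (\<sigma> * a \<gamma>)) \<delta>)"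

definition tp_posterior_mass ::
  "(real \<Rightarrow> real \<Rightarrow> ennreal) \<Rightarrow> (real \<Rightarrow> real) \<Rightarrow> (real \<Rightarrow> real) \<Rightarrow> nat \<Rightarrow>
   (nat \<Rightarrow> real ^ 'p) \<Rightarrow> (nat \<Rightarrow> real) \<Rightarrow> real \<Rightarrow> real set \<Rightarrow> (real \<Rightarrow> real) \<Rightarrow>
   real set \<Rightarrow> (real \<Rightarrow> real) \<Rightarrow> ennreal" where
  "tp_posterior_mass f a b n x y q \<Delta> \<pi>\<delta> \<Gamma> \<pi>\<gamma> =
     (\<integral>\<^sup>+ \<beta>. (\<integral>\<^sup>+ \<sigma>\<in>{0<..}. (\<integral>\<^sup>+ \<delta>\<in>\<Delta>. (\<integral>\<^sup>+ \<gamma>\<in>\<Gamma>.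
        (\<Prod>j<n. tp_density f a b 0 \<sigma> \<delta> \<gamma> (y j - x j \<bullet> \<beta>)) *
        ennreal (\<pi>\<gamma> \<gamma>) * ennreal (\<pi>\<delta> \<delta>) * ennreal (\<sigma> powr (- q))
      \<partial>lborel) \<partial>lborel) \<partial>lborel) \<partial>lborel)"

definition sym_posterior_mass ::
  "(real \<Rightarrow> real \<Rightarrow> ennreal) \<Rightarrow> nat \<Rightarrow> (nat \<Rightarrow> real ^ 'p) \<Rightarrow> (nat \<Rightarrow> real) \<Rightarrow> real \<Rightarrow>
   real set \<Rightarrow> (real \<Rightarrow> real) \<Rightarrow> ennreal" where
  "sym_posterior_mass f n x y q \<Delta> \<pi>\<delta> =
     (\<integral>\<^sup>+ \<beta>. (\<integral>\<^sup>+ \<sigma>\<in>{0<..}. (\<integral>\<^sup>+ \<delta>\<in>\<Delta>.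
        (\<Prod>j<n. ennreal (1 / \<sigma>) * f ((y j - x j \<bullet> \<beta>) / \<sigma>) \<delta>) *
        ennreal (\<pi>\<delta> \<delta>) * ennreal (\<sigma> powr (- q))
      \<partial>lborel) \<partial>lborel) \<partial>lborel)"

end

theory Submission
  imports Defs
begin


lemma swap4:
  fixes G :: "'a::euclidean_space \<Rightarrow> real \<Rightarrow> real \<Rightarrow> real \<Rightarrow> ennreal"
  assumes Gm: "(\<lambda>(\<beta>,\<sigma>,\<delta>,\<gamma>). G \<beta> \<sigma> \<delta> \<gamma>) \<in> borel_measurable (lborel \<Otimes>\<^sub>M lborel \<Otimes>\<^sub>M lborel \<Otimes>\<^sub>M lborel)"
  shows "(\<integral>\<^sup>+\<beta>. \<integral>\<^sup>+\<sigma>. \<integral>\<^sup>+\<delta>. \<integral>\<^sup>+\<gamma>. G \<beta> \<sigma> \<delta> \<gamma> \<partial>lborel \<partial>lborel \<partial>lborel \<partial>lborel)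
       = (\<integral>\<^sup>+\<gamma>. \<integral>\<^sup>+\<beta>. \<integral>\<^sup>+\<sigma>. \<integral>\<^sup>+\<delta>. G \<beta> \<sigma> \<delta> \<gamma> \<partial>lborel \<partial>lborel \<partial>lborel \<partial>lborel)"
proof -
  have m1: "(\<lambda>(\<gamma>,\<delta>). G \<beta> \<sigma> \<delta> \<gamma>) \<in> borel_measurable (lborel \<Otimes>\<^sub>M lborel)" for \<beta> \<sigma>
  proof -
    have "(\<lambda>w::real\<times>real. (\<beta>, \<sigma>, snd w, fst w)) \<in> (lborel \<Otimes>\<^sub>M lborel) \<rightarrow>\<^sub>M (lborel \<Otimes>\<^sub>M lborel \<Otimes>\<^sub>M lborel \<Otimes>\<^sub>M lborel)"
      by measurable
    from measurable_compose[OF this Gm] show ?thesis by (simp add: case_prod_beta)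
  qed
  have m2: "(\<lambda>(\<gamma>,\<sigma>). \<integral>\<^sup>+\<delta>. G \<beta> \<sigma> \<delta> \<gamma> \<partial>lborel) \<in> borel_measurable (lborel \<Otimes>\<^sub>M lborel)" for \<beta>
  proof -
    have "(\<lambda>w::(real\<times>real)\<times>real. (\<beta>, snd (fst w), snd w, fst (fst w))) \<in> ((lborel \<Otimes>\<^sub>M lborel) \<Otimes>\<^sub>M lborel) \<rightarrow>\<^sub>M (lborel \<Otimes>\<^sub>M lborel \<Otimes>\<^sub>M lborel \<Otimes>\<^sub>M lborel)"
      by measurable
    from measurable_compose[OF this Gm]
    have "(\<lambda>(w,\<delta>). G \<beta> (snd w) \<delta> (fst w)) \<in> borel_measurable ((lborel \<Otimes>\<^sub>M lborel) \<Otimes>\<^sub>M lborel)"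
      by (simp add: case_prod_beta)
    from lborel.borel_measurable_nn_integral[OF this] show ?thesis by (simp add: case_prod_beta)
  qed
  have m3: "(\<lambda>(\<gamma>,\<beta>). \<integral>\<^sup>+\<sigma>. \<integral>\<^sup>+\<delta>. G \<beta> \<sigma> \<delta> \<gamma> \<partial>lborel \<partial>lborel) \<in> borel_measurable (lborel \<Otimes>\<^sub>M lborel)"
  proof -
    have "(\<lambda>w::((real\<times>'a)\<times>real)\<times>real. (snd (fst (fst w)), snd (fst w), snd w, fst (fst (fst w)))) \<in> (((lborel \<Otimes>\<^sub>M lborel) \<Otimes>\<^sub>M lborel) \<Otimes>\<^sub>M lborel) \<rightarrow>\<^sub>M (lborel \<Otimes>\<^sub>M lborel \<Otimes>\<^sub>M lborel \<Otimes>\<^sub>M lborel)"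
      by measurable
    from measurable_compose[OF this Gm]
    have "(\<lambda>(v,\<delta>). G (snd (fst v)) (snd v) \<delta> (fst (fst v))) \<in> borel_measurable (((lborel \<Otimes>\<^sub>M lborel) \<Otimes>\<^sub>M lborel) \<Otimes>\<^sub>M lborel)"
      by (simp add: case_prod_beta)
    from lborel.borel_measurable_nn_integral[OF this]
    have "(\<lambda>(w,\<sigma>). \<integral>\<^sup>+\<delta>. G (snd w) \<sigma> \<delta> (fst w) \<partial>lborel) \<in> borel_measurable ((lborel \<Otimes>\<^sub>M lborel) \<Otimes>\<^sub>M lborel)"
      by (simp add: case_prod_beta)
    from lborel.borel_measurable_nn_integral[OF this] show ?thesis by (simp add: case_prod_beta)
  qed
  have "(\<integral>\<^sup>+\<beta>. \<integral>\<^sup>+\<sigma>. \<integral>\<^sup>+\<delta>. \<integral>\<^sup>+\<gamma>. G \<beta> \<sigma> \<delta> \<gamma> \<partial>lborel \<partial>lborel \<partial>lborel \<partial>lborel)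
      = (\<integral>\<^sup>+\<beta>. \<integral>\<^sup>+\<sigma>. \<integral>\<^sup>+\<gamma>. \<integral>\<^sup>+\<delta>. G \<beta> \<sigma> \<delta> \<gamma> \<partial>lborel \<partial>lborel \<partial>lborel \<partial>lborel)"
    using lborel_pair.Fubini'[OF m1] by simp
  also have "\<dots> = (\<integral>\<^sup>+\<beta>. \<integral>\<^sup>+\<gamma>. \<integral>\<^sup>+\<sigma>. \<integral>\<^sup>+\<delta>. G \<beta> \<sigma> \<delta> \<gamma> \<partial>lborel \<partial>lborel \<partial>lborel \<partial>lborel)"
    using lborel_pair.Fubini'[OF m2] by simp
  also have "\<dots> = (\<integral>\<^sup>+\<gamma>. \<integral>\<^sup>+\<beta>. \<integral>\<^sup>+\<sigma>. \<integral>\<^sup>+\<delta>. G \<beta> \<sigma> \<delta> \<gamma> \<partial>lborel \<partial>lborel \<partial>lborel \<partial>lborel)"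
    using lborel_pair.Fubini'[OF m3] by simp
  finally show ?thesis .
qed

lemma Fgen_comp:
  assumes Fm: "(\<lambda>(z,\<delta>). F z \<delta>) \<in> borel_measurable (borel \<Otimes>\<^sub>M borel)"
  and [measurable]: "u \<in> borel_measurable M" "v \<in> borel_measurable M"
  shows "(\<lambda>w. F (u w) (v w)) \<in> borel_measurable M"
  using measurable_compose[OF measurable_Pair[of u M borel v borel] Fm] by simp

lemma pointwise_scale:
  fixes F :: "real \<Rightarrow> real \<Rightarrow> ennreal" and z :: "nat \<Rightarrow> real"
  assumes k: "k > 0" and A: "A > 0" and \<sigma>: "\<sigma> > 0" and pg: "pg \<ge> 0"
  shows "(\<Prod>j<n. ennreal (2/(\<sigma>*A)) * F (z j/(\<sigma>*k)) \<delta>) * ennreal pg * pd * ennreal (\<sigma> powr -q)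
    = ennreal ((2*k/A)^n * k powr q * pg) * ((\<Prod>j<n. ennreal (1/(\<sigma>*k)) * F (z j/(\<sigma>*k)) \<delta>) * pd * ennreal ((\<sigma>*k) powr -q))"
proof -
  have e1: "ennreal (2/(\<sigma>*A)) = ennreal (2*k/A) * ennreal (1/(\<sigma>*k))"
    using k A \<sigma> by (subst ennreal_mult[symmetric]) (auto simp: field_simps)
  have e2: "ennreal (\<sigma> powr -q) = ennreal (k powr q) * ennreal ((\<sigma>*k) powr -q)"
    using k \<sigma> by (subst ennreal_mult[symmetric]) (auto simp: powr_mult powr_minus field_simps)
  have e3: "ennreal ((2*k/A)^n * k powr q * pg) = ennreal (2*k/A) ^ n * ennreal (k powr q) * ennreal pg"
    using k A pg by (simp add: ennreal_mult ennreal_power)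
  have e4: "(\<Prod>j<n. ennreal (2*k/A) * ennreal (1/(\<sigma>*k)) * F (z j/(\<sigma>*k)) \<delta>)
      = ennreal (2*k/A) ^ n * (\<Prod>j<n. ennreal (1/(\<sigma>*k)) * F (z j/(\<sigma>*k)) \<delta>)"
    by (simp add: prod.distrib mult.assoc)
  show ?thesis unfolding e1 e2 e3 e4 by (simp add: ac_simps)
qed

lemma affine_sigma:
  fixes Q :: "real \<Rightarrow> ennreal"
  assumes [measurable]: "Q \<in> borel_measurable borel" and k: "k > 0"
  shows "(\<integral>\<^sup>+\<sigma>. Q (\<sigma>*k) * indicator {0<..} \<sigma> \<partial>lborel) = ennreal (1/k) * (\<integral>\<^sup>+s. Q s * indicator {0<..} s \<partial>lborel)"
proof -
  have m: "(\<lambda>s. Q s * indicator {0<..} s) \<in> borel_measurable borel" using assms(1) by (intro borel_measurable_times_ennreal borel_measurable_indicator) auto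
  have kk: "k \<noteq> 0" using k by simp
  have pw: "Q (0 + k*\<sigma>) * indicator {0<..} (0 + k*\<sigma>) = Q (\<sigma>*k) * indicator {0<..} \<sigma>" for \<sigma>
  proof -
    have "(0 < k*\<sigma>) = (0 < \<sigma>)" using k by (simp add: zero_less_mult_iff)
    then have "indicator {0<..} (k*\<sigma>) = (indicator {0<..} \<sigma> :: ennreal)" by (simp add: indicator_def)
    then show ?thesis by (simp add: mult.commute[of k])
  qed
  have "(\<integral>\<^sup>+s. Q s * indicator {0<..} s \<partial>lborel) = ennreal \<bar>k\<bar> * (\<integral>\<^sup>+\<sigma>. Q (0 + k*\<sigma>) * indicator {0<..} (0 + k*\<sigma>) \<partial>lborel)"
    using nn_integral_real_affine[OF m kk, where t=0] by simp
  also have "\<dots> = ennreal k * (\<integral>\<^sup>+\<sigma>. Q (\<sigma>*k) * indicator {0<..} \<sigma> \<partial>lborel)"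
    using k by (simp only: pw abs_of_pos)
  finally have "ennreal (1/k) * (\<integral>\<^sup>+s. Q s * indicator {0<..} s \<partial>lborel) = (ennreal (1/k) * ennreal k) * (\<integral>\<^sup>+\<sigma>. Q (\<sigma>*k) * indicator {0<..} \<sigma> \<partial>lborel)"
    by (simp only: mult.assoc)
  also have "ennreal (1/k) * ennreal k = 1" using k by (simp add: ennreal_mult[symmetric])
  finally show ?thesis by simp
qed

lemma scale:
  fixes F :: "real \<Rightarrow> real \<Rightarrow> ennreal" and x :: "nat \<Rightarrow> real ^ 'p" and y :: "nat \<Rightarrow> real"
    and a b c pg pd :: "real \<Rightarrow> real" and \<Gamma> \<Delta> :: "real set" and q :: real and n :: nat
  assumes Fm: "(\<lambda>(z,\<delta>). F z \<delta>) \<in> borel_measurable (borel \<Otimes>\<^sub>M borel)"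
    and [measurable]: "a \<in> borel_measurable borel" "b \<in> borel_measurable borel" "c \<in> borel_measurable borel"
      "pg \<in> borel_measurable borel" "pd \<in> borel_measurable borel" "\<Gamma> \<in> sets borel" "\<Delta> \<in> sets borel"
    and apos: "\<And>\<gamma>. \<gamma> \<in> \<Gamma> \<Longrightarrow> a \<gamma> > 0" and bpos: "\<And>\<gamma>. \<gamma> \<in> \<Gamma> \<Longrightarrow> b \<gamma> > 0"
    and cpos: "\<And>\<gamma>. \<gamma> \<in> \<Gamma> \<Longrightarrow> c \<gamma> > 0" and pgnn: "\<And>\<gamma>. pg \<gamma> \<ge> 0"
  shows "(\<integral>\<^sup>+\<beta>. \<integral>\<^sup>+\<sigma>. \<integral>\<^sup>+\<delta>. \<integral>\<^sup>+\<gamma>.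
      (\<Prod>j<n. ennreal (2/(\<sigma>*(a \<gamma>+b \<gamma>))) * F ((y j - x j \<bullet> \<beta>)/(\<sigma> * c \<gamma>)) \<delta>) * ennreal (pg \<gamma>)
        * ennreal (pd \<delta>) * ennreal (\<sigma> powr -q) * indicator {0<..} \<sigma> * indicator \<Delta> \<delta> * indicator \<Gamma> \<gamma>
      \<partial>lborel \<partial>lborel \<partial>lborel \<partial>lborel)
   = (\<integral>\<^sup>+\<gamma>. ennreal ((2*c \<gamma>/(a \<gamma>+b \<gamma>))^n * c \<gamma> powr q * pg \<gamma> / c \<gamma>) * indicator \<Gamma> \<gamma> \<partial>lborel)
       * sym_posterior_mass F n x y q \<Delta> pd"
  (is "?L = ?R")
proof -
  note Fc[measurable] = Fgen_comp[OF Fm]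
  let ?B = "\<lambda>\<beta> \<sigma> \<delta> \<gamma>. (\<Prod>j<n. ennreal (2/(\<sigma>*(a \<gamma>+b \<gamma>))) * F ((y j - x j \<bullet> \<beta>)/(\<sigma> * c \<gamma>)) \<delta>) * ennreal (pg \<gamma>)
        * ennreal (pd \<delta>) * ennreal (\<sigma> powr -q) * indicator {0<..} \<sigma> * indicator \<Delta> \<delta> * indicator \<Gamma> \<gamma>"
  let ?S = "\<lambda>\<beta> s \<delta>. (\<Prod>j<n. ennreal (1/s) * F ((y j - x j \<bullet> \<beta>)/s) \<delta>) * ennreal (pd \<delta>) * ennreal (s powr -q) * indicator \<Delta> \<delta>"
  let ?K = "\<lambda>\<gamma>. (2*c \<gamma>/(a \<gamma>+b \<gamma>))^n * c \<gamma> powr q * pg \<gamma>"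
  have "?L = (\<integral>\<^sup>+\<gamma>. \<integral>\<^sup>+\<beta>. \<integral>\<^sup>+\<sigma>. \<integral>\<^sup>+\<delta>. ?B \<beta> \<sigma> \<delta> \<gamma> \<partial>lborel \<partial>lborel \<partial>lborel \<partial>lborel)"
    by (rule swap4) measurable
  also have "\<dots> = (\<integral>\<^sup>+\<gamma>. ennreal (?K \<gamma> / c \<gamma>) * indicator \<Gamma> \<gamma> * sym_posterior_mass F n x y q \<Delta> pd \<partial>lborel)"
  proof (rule nn_integral_cong)
    fix \<gamma> :: real
    show "(\<integral>\<^sup>+\<beta>. \<integral>\<^sup>+\<sigma>. \<integral>\<^sup>+\<delta>. ?B \<beta> \<sigma> \<delta> \<gamma> \<partial>lborel \<partial>lborel \<partial>lborel)
        = ennreal (?K \<gamma> / c \<gamma>) * indicator \<Gamma> \<gamma> * sym_posterior_mass F n x y q \<Delta> pd"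
    proof (cases "\<gamma> \<in> \<Gamma>")
      case False
      then show ?thesis by simp
    next
      case True
      define k where "k = c \<gamma>"
      define A where "A = a \<gamma> + b \<gamma>"
      have k: "k > 0" using cpos[OF True] k_def by simp
      have A: "A > 0" using apos[OF True] bpos[OF True] A_def by simp
      have Knn: "?K \<gamma> \<ge> 0" using k A pgnn[of \<gamma>] unfolding k_def[symmetric] A_def[symmetric] by simp
      have inner: "(\<integral>\<^sup>+\<delta>. ?B \<beta> \<sigma> \<delta> \<gamma> \<partial>lborel) = ennreal (?K \<gamma>) * ((\<integral>\<^sup>+\<delta>. ?S \<beta> (\<sigma>*k) \<delta> \<partial>lborel) * indicator {0<..} \<sigma>)" for \<beta> \<sigma>
      proof (cases "\<sigma> > 0")
        case False then show ?thesis by simp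
      next
        case s: True
        have "?B \<beta> \<sigma> \<delta> \<gamma> = ennreal (?K \<gamma>) * ?S \<beta> (\<sigma>*k) \<delta>" for \<delta>
          using pointwise_scale[OF k A s pgnn[of \<gamma>], where n=n and F=F and z="\<lambda>j. y j - x j \<bullet> \<beta>" and \<delta>=\<delta> and pd="ennreal (pd \<delta>)" and q=q] s True
          unfolding k_def A_def by (simp add: mult.assoc)
        then have "(\<integral>\<^sup>+\<delta>. ?B \<beta> \<sigma> \<delta> \<gamma> \<partial>lborel) = (\<integral>\<^sup>+\<delta>. ennreal (?K \<gamma>) * ?S \<beta> (\<sigma>*k) \<delta> \<partial>lborel)"
          by simp
        also have "\<dots> = ennreal (?K \<gamma>) * (\<integral>\<^sup>+\<delta>. ?S \<beta> (\<sigma>*k) \<delta> \<partial>lborel)"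
          by (rule nn_integral_cmult) measurable
        finally show ?thesis using s by simp
      qed
      have Qm: "(\<lambda>s. \<integral>\<^sup>+\<delta>. ?S \<beta> s \<delta> \<partial>lborel) \<in> borel_measurable borel" for \<beta>
        by measurable
      have "(\<integral>\<^sup>+\<beta>. \<integral>\<^sup>+\<sigma>. \<integral>\<^sup>+\<delta>. ?B \<beta> \<sigma> \<delta> \<gamma> \<partial>lborel \<partial>lborel \<partial>lborel)
          = (\<integral>\<^sup>+\<beta>. ennreal (?K \<gamma>) * (\<integral>\<^sup>+\<sigma>. (\<integral>\<^sup>+\<delta>. ?S \<beta> (\<sigma>*k) \<delta> \<partial>lborel) * indicator {0<..} \<sigma> \<partial>lborel) \<partial>lborel)"
        unfolding inner
        by (intro nn_integral_cong nn_integral_cmult) measurable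
      also have "\<dots> = (\<integral>\<^sup>+\<beta>. ennreal (?K \<gamma>) * (ennreal (1/k) * (\<integral>\<^sup>+\<sigma>. (\<integral>\<^sup>+\<delta>. ?S \<beta> \<sigma> \<delta> \<partial>lborel) * indicator {0<..} \<sigma> \<partial>lborel)) \<partial>lborel)"
        by (intro nn_integral_cong arg_cong2[where f="(*)"] refl affine_sigma[OF Qm k])
      also have "\<dots> = (\<integral>\<^sup>+\<beta>. ennreal (?K \<gamma> / k) * (\<integral>\<^sup>+\<sigma>. (\<integral>\<^sup>+\<delta>. ?S \<beta> \<sigma> \<delta> \<partial>lborel) * indicator {0<..} \<sigma> \<partial>lborel) \<partial>lborel)"
        using Knn k by (simp add: mult.assoc[symmetric] ennreal_mult[symmetric])
      also have "\<dots> = ennreal (?K \<gamma> / k) * sym_posterior_mass F n x y q \<Delta> pd"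
        unfolding sym_posterior_mass_def
        by (rule nn_integral_cmult) measurable
      finally show ?thesis using True k_def by simp
    qed
  qed
  also have "\<dots> = ?R"
    by (rule nn_integral_multc) measurable
  finally show ?thesis .
qed


lemma F_meas:
  assumes H: "H \<in> borel \<rightarrow>\<^sub>M prob_algebra borel"
  shows "(\<lambda>(z,\<delta>). smn_density H z \<delta>) \<in> borel_measurable (borel \<Otimes>\<^sub>M borel)"
proof -
  have L: "(\<lambda>w. H (snd w)) \<in> (borel \<Otimes>\<^sub>M borel) \<rightarrow>\<^sub>M subprob_algebra borel"
    using measurable_prob_algebraD[OF H] by measurable
  have "(\<lambda>w. integral\<^sup>N (H (snd w)) (\<lambda>\<tau>. ennreal (sqrt \<tau> * std_normal_density (sqrt \<tau> * fst w)))) \<in> borel_measurable (borel \<Otimes>\<^sub>M borel)"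
    by (rule nn_integral_measurable_subprob_algebra2[OF _ L]) measurable
  then show ?thesis by (simp add: smn_density_def case_prod_beta)
qed

lemma smn_mono:
  assumes "\<bar>u\<bar> \<le> \<bar>v\<bar>"
  shows "smn_density H v \<delta> \<le> smn_density H u \<delta>"
  unfolding smn_density_def
proof (rule nn_integral_mono)
  fix \<tau> :: real
  show "ennreal (sqrt \<tau> * std_normal_density (sqrt \<tau> * v)) \<le> ennreal (sqrt \<tau> * std_normal_density (sqrt \<tau> * u))"
  proof (cases "\<tau> > 0")
    case False
    then have "sqrt \<tau> * std_normal_density (sqrt \<tau> * v) \<le> 0"
      by (intro mult_nonpos_nonneg) (auto simp: normal_density_nonneg)
    then show ?thesis by (simp add: ennreal_neg)
  next
    case True
    have "u\<^sup>2 \<le> v\<^sup>2" using assms by (simp add: abs_le_square_iff)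
    then have "(sqrt \<tau> * u)\<^sup>2 \<le> (sqrt \<tau> * v)\<^sup>2" using True by (simp add: power_mult_distrib mult_left_mono)
    then have "std_normal_density (sqrt \<tau> * v) \<le> std_normal_density (sqrt \<tau> * u)"
      by (simp add: normal_density_def divide_right_mono)
    then show ?thesis using True by (intro ennreal_leI mult_left_mono) auto
  qed
qed

lemma smn_pos:
  assumes H: "H \<in> borel \<rightarrow>\<^sub>M prob_algebra borel"
    and Hp: "emeasure (H \<delta>) {..0} = 0"
  shows "smn_density H z \<delta> > 0"
proof (rule ccontr)
  assume "\<not> smn_density H z \<delta> > 0"
  then have z: "smn_density H z \<delta> = 0" by (simp add: not_gr_zero)
  have "H \<delta> \<in> space (prob_algebra borel)" using measurable_space[OF H] by simp
  then have ps: "prob_space (H \<delta>)" and sH: "sets (H \<delta>) = sets borel" by (auto simp: space_prob_algebra)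
  have m: "(\<lambda>\<tau>. ennreal (sqrt \<tau> * std_normal_density (sqrt \<tau> * z))) \<in> borel_measurable (H \<delta>)"
  proof -
    have "(\<lambda>\<tau>. ennreal (sqrt \<tau> * std_normal_density (sqrt \<tau> * z))) \<in> borel_measurable borel"
      unfolding normal_density_def by measurable
    then show ?thesis by (simp add: measurable_cong_sets[OF sH refl])
  qed
  have "AE \<tau> in H \<delta>. ennreal (sqrt \<tau> * std_normal_density (sqrt \<tau> * z)) = 0"
    using z m unfolding smn_density_def by (simp add: nn_integral_0_iff_AE)
  then have A1: "AE \<tau> in H \<delta>. \<tau> \<le> 0"
  proof (rule AE_mp, intro AE_I2 impI)
    fix \<tau> :: real assume e0: "ennreal (sqrt \<tau> * std_normal_density (sqrt \<tau> * z)) = 0"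
    show "\<tau> \<le> 0"
    proof (rule ccontr)
      assume "\<not> \<tau> \<le> 0"
      then have "sqrt \<tau> * std_normal_density (sqrt \<tau> * z) > 0"
        by (intro mult_pos_pos) (auto simp: normal_density_pos)
      with e0 show False by (metis ennreal_eq_0_iff not_le)
    qed
  qed
  have "{..0::real} \<in> null_sets (H \<delta>)" using Hp sH by (auto simp: null_sets_def)
  then have A2: "AE \<tau> in H \<delta>. \<tau> \<notin> {..0}" by (rule AE_not_in)
  have "AE \<tau> in H \<delta>. False" using A1 A2 by eventually_elim auto
  then show False using prob_space.AE_False[OF ps] by simp
qed


lemma pos_int2:
  fixes f g :: "'a::euclidean_space \<Rightarrow> ennreal"
  assumes gm: "g \<in> borel_measurable lborel" and fm: "f \<in> borel_measurable lborel"
    and g0: "(\<integral>\<^sup>+x. g x \<partial>lborel) \<noteq> 0" and fg: "\<And>x. g x \<noteq> 0 \<Longrightarrow> f x \<noteq> 0"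
  shows "(\<integral>\<^sup>+x. f x \<partial>lborel) > 0"
proof (rule ccontr)
  assume "\<not> (\<integral>\<^sup>+x. f x \<partial>lborel) > 0"
  then have "(\<integral>\<^sup>+x. f x \<partial>lborel) = 0" by (simp add: not_gr_zero)
  then have "AE x in lborel. f x = 0" using fm by (simp add: nn_integral_0_iff_AE)
  then have "AE x in lborel. g x = 0" by (rule AE_mp) (use fg in auto)
  then have "(\<integral>\<^sup>+x. g x \<partial>lborel) = 0" using gm by (simp add: nn_integral_0_iff_AE)
  with g0 show False by simp
qed

lemma setint4:
  fixes P :: "'a::euclidean_space \<Rightarrow> real \<Rightarrow> real \<Rightarrow> real \<Rightarrow> ennreal"
  assumes m1: "\<And>\<beta> \<sigma> \<delta>. P \<beta> \<sigma> \<delta> \<in> borel_measurable lborel"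
    and m2: "\<And>\<beta> \<sigma>. (\<lambda>\<delta>. \<integral>\<^sup>+\<gamma>. P \<beta> \<sigma> \<delta> \<gamma> * indicator \<Gamma> \<gamma> \<partial>lborel) \<in> borel_measurable lborel"
    and [measurable]: "\<Gamma> \<in> sets borel" "\<Delta> \<in> sets borel"
  shows "(\<integral>\<^sup>+\<beta>. (\<integral>\<^sup>+\<sigma>\<in>{0<..}. (\<integral>\<^sup>+\<delta>\<in>\<Delta>. (\<integral>\<^sup>+\<gamma>\<in>\<Gamma>. P \<beta> \<sigma> \<delta> \<gamma> \<partial>lborel) \<partial>lborel) \<partial>lborel) \<partial>lborel)
    = (\<integral>\<^sup>+\<beta>. \<integral>\<^sup>+\<sigma>. \<integral>\<^sup>+\<delta>. \<integral>\<^sup>+\<gamma>. P \<beta> \<sigma> \<delta> \<gamma> * indicator {0<..} \<sigma> * indicator \<Delta> \<delta> * indicator \<Gamma> \<gamma> \<partial>lborel \<partial>lborel \<partial>lborel \<partial>lborel)"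
proof (rule nn_integral_cong)
  fix \<beta> :: 'a
  have i1: "(\<integral>\<^sup>+\<gamma>. P \<beta> \<sigma> \<delta> \<gamma> * indicator \<Gamma> \<gamma> \<partial>lborel) * (indicator \<Delta> \<delta> * indicator {0<..} \<sigma>)
      = (\<integral>\<^sup>+\<gamma>. P \<beta> \<sigma> \<delta> \<gamma> * indicator {0<..} \<sigma> * indicator \<Delta> \<delta> * indicator \<Gamma> \<gamma> \<partial>lborel)" for \<sigma> \<delta>
  proof -
    have "(\<integral>\<^sup>+\<gamma>. P \<beta> \<sigma> \<delta> \<gamma> * indicator \<Gamma> \<gamma> \<partial>lborel) * (indicator \<Delta> \<delta> * indicator {0<..} \<sigma>)
       = (\<integral>\<^sup>+\<gamma>. P \<beta> \<sigma> \<delta> \<gamma> * indicator \<Gamma> \<gamma> * (indicator \<Delta> \<delta> * indicator {0<..} \<sigma>) \<partial>lborel)"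
      by (rule nn_integral_multc[symmetric]) (use m1 assms(3) in \<open>auto intro!: borel_measurable_times_ennreal borel_measurable_indicator\<close>)
    also have "\<dots> = (\<integral>\<^sup>+\<gamma>. P \<beta> \<sigma> \<delta> \<gamma> * indicator {0<..} \<sigma> * indicator \<Delta> \<delta> * indicator \<Gamma> \<gamma> \<partial>lborel)"
      by (simp add: ac_simps)
    finally show ?thesis .
  qed
  have i2: "(\<integral>\<^sup>+\<delta>. (\<integral>\<^sup>+\<gamma>. P \<beta> \<sigma> \<delta> \<gamma> * indicator \<Gamma> \<gamma> \<partial>lborel) * indicator \<Delta> \<delta> \<partial>lborel) * indicator {0<..} \<sigma>
     = (\<integral>\<^sup>+\<delta>. (\<integral>\<^sup>+\<gamma>. P \<beta> \<sigma> \<delta> \<gamma> * indicator \<Gamma> \<gamma> \<partial>lborel) * (indicator \<Delta> \<delta> * indicator {0<..} \<sigma>) \<partial>lborel)" for \<sigma>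
  proof -
    have "(\<integral>\<^sup>+\<delta>. (\<integral>\<^sup>+\<gamma>. P \<beta> \<sigma> \<delta> \<gamma> * indicator \<Gamma> \<gamma> \<partial>lborel) * indicator \<Delta> \<delta> \<partial>lborel) * indicator {0<..} \<sigma>
     = (\<integral>\<^sup>+\<delta>. (\<integral>\<^sup>+\<gamma>. P \<beta> \<sigma> \<delta> \<gamma> * indicator \<Gamma> \<gamma> \<partial>lborel) * indicator \<Delta> \<delta> * indicator {0<..} \<sigma> \<partial>lborel)"
      by (rule nn_integral_multc[symmetric]) (use m2 assms(4) in \<open>auto intro!: borel_measurable_times_ennreal borel_measurable_indicator\<close>)
    then show ?thesis by (simp add: mult.assoc)
  qed
  show "(\<integral>\<^sup>+\<sigma>\<in>{0<..}. (\<integral>\<^sup>+\<delta>\<in>\<Delta>. (\<integral>\<^sup>+\<gamma>\<in>\<Gamma>. P \<beta> \<sigma> \<delta> \<gamma> \<partial>lborel) \<partial>lborel) \<partial>lborel)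
    = (\<integral>\<^sup>+\<sigma>. \<integral>\<^sup>+\<delta>. \<integral>\<^sup>+\<gamma>. P \<beta> \<sigma> \<delta> \<gamma> * indicator {0<..} \<sigma> * indicator \<Delta> \<delta> * indicator \<Gamma> \<gamma> \<partial>lborel \<partial>lborel \<partial>lborel)"
    unfolding i2 i1 by simp
qed

lemma absdiv: "0 < m \<Longrightarrow> m \<le> c \<Longrightarrow> \<bar>z / c\<bar> \<le> \<bar>z / (m::real)\<bar>"
  by (simp add: abs_divide frac_le)

lemma tp_bounds:
  assumes "\<sigma> > 0" "a\<gamma> > 0" "b\<gamma> > 0"
  shows "ennreal (2/(\<sigma>*(a\<gamma>+b\<gamma>))) * smn_density H (z/(\<sigma> * min a\<gamma> b\<gamma>)) \<delta>
           \<le> tp_density (smn_density H) (\<lambda>_. a\<gamma>) (\<lambda>_. b\<gamma>) 0 \<sigma> \<delta> \<gamma> z"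
    and "tp_density (smn_density H) (\<lambda>_. a\<gamma>) (\<lambda>_. b\<gamma>) 0 \<sigma> \<delta> \<gamma> z
           \<le> ennreal (2/(\<sigma>*(a\<gamma>+b\<gamma>))) * smn_density H (z/(\<sigma> * max a\<gamma> b\<gamma>)) \<delta>"
  using assms unfolding tp_density_def
  by (auto intro!: mult_left_mono smn_mono absdiv mult_pos_pos mult_left_mono simp: min_def max_def)




lemma const_eq:
  fixes c A pg :: real and n :: nat
  assumes c: "c > 0" and A: "A > 0" and pg: "pg \<ge> 0"
  shows "ennreal ((2*c/A)^n * c powr q * pg / c) = 2^n * ennreal (c powr (real n + q - 1) / A^n * pg)"
proof -
  have "c powr (real n + q - 1) = c^n * c powr q / c"
    using c by (simp add: powr_diff powr_add powr_realpow)
  then have "(2*c/A)^n * c powr q * pg / c = 2^n * (c powr (real n + q - 1) / A^n * pg)"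
    using c A by (simp add: power_divide power_mult_distrib field_simps)
  moreover have "c powr (real n + q - 1) / A^n * pg \<ge> 0" using c A pg by simp
  moreover have "ennreal (2^n * (c powr (real n + q - 1) / A^n * pg)) = 2^n * ennreal (c powr (real n + q - 1) / A^n * pg)"
    using calculation(2) ennreal_power[of 2 n] by (subst ennreal_mult) auto
  ultimately show ?thesis by simp
qed

theorem theorem3p1:
  fixes n :: nat and x :: "nat \<Rightarrow> real ^ 'p" and y :: "nat \<Rightarrow> real"
    and H :: "real \<Rightarrow> real measure" and \<Delta> \<Gamma> :: "real set"
    and a b \<pi>\<gamma> \<pi>\<delta> :: "real \<Rightarrow> real" and q :: real
  assumes full_rank: "\<And>\<beta>. (\<forall>j<n. x j \<bullet> \<beta> = 0) \<Longrightarrow> \<beta> = 0"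
    and H_kernel: "H \<in> borel \<rightarrow>\<^sub>M prob_algebra borel"
    and H_pos: "\<And>\<delta>. \<delta> \<in> \<Delta> \<Longrightarrow> emeasure (H \<delta>) {..0} = 0"
    and Delta_meas: "\<Delta> \<in> sets borel" and Gamma_meas: "\<Gamma> \<in> sets borel"
    and a_meas: "a \<in> borel_measurable borel" and b_meas: "b \<in> borel_measurable borel"
    and a_pos: "\<And>\<gamma>. \<gamma> \<in> \<Gamma> \<Longrightarrow> a \<gamma> > 0" and b_pos: "\<And>\<gamma>. \<gamma> \<in> \<Gamma> \<Longrightarrow> b \<gamma> > 0"
    and q_nonneg: "q \<ge> 0"
    and \<pi>\<gamma>_meas: "\<pi>\<gamma> \<in> borel_measurable borel" and \<pi>\<gamma>_nonneg: "\<And>\<gamma>. \<pi>\<gamma> \<gamma> \<ge> 0"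
    and \<pi>\<gamma>_proper: "(\<integral>\<^sup>+ \<gamma>\<in>\<Gamma>. ennreal (\<pi>\<gamma> \<gamma>) \<partial>lborel) = 1"
    and \<pi>\<delta>_meas: "\<pi>\<delta> \<in> borel_measurable borel" and \<pi>\<delta>_nonneg: "\<And>\<delta>. \<pi>\<delta> \<delta> \<ge> 0"
    and \<pi>\<delta>_proper: "(\<integral>\<^sup>+ \<delta>\<in>\<Delta>. ennreal (\<pi>\<delta> \<delta>) \<partial>lborel) = 1"
  shows
    "(tp_posterior_mass (smn_density H) a b n x y q \<Delta> \<pi>\<delta> \<Gamma> \<pi>\<gamma> < \<infinity> \<longrightarrow>
        sym_posterior_mass (smn_density H) n x y q \<Delta> \<pi>\<delta> < \<infinity> \<and>
        (\<integral>\<^sup>+ \<gamma>\<in>\<Gamma>. ennreal (min (a \<gamma>) (b \<gamma>) powr (real n + q - 1)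
            / (a \<gamma> + b \<gamma>) ^ n * \<pi>\<gamma> \<gamma>) \<partial>lborel) < \<infinity>)
     \<and>
     ((sym_posterior_mass (smn_density H) n x y q \<Delta> \<pi>\<delta> < \<infinity> \<and>
        (\<integral>\<^sup>+ \<gamma>\<in>\<Gamma>. ennreal (max (a \<gamma>) (b \<gamma>) powr (real n + q - 1)
            / (a \<gamma> + b \<gamma>) ^ n * \<pi>\<gamma> \<gamma>) \<partial>lborel) < \<infinity>) \<longrightarrow>
        tp_posterior_mass (smn_density H) a b n x y q \<Delta> \<pi>\<delta> \<Gamma> \<pi>\<gamma> < \<infinity>)"
proof -
  define F where "F = smn_density H"
  have Fm: "(\<lambda>(z,\<delta>). F z \<delta>) \<in> borel_measurable (borel \<Otimes>\<^sub>M borel)"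
    unfolding F_def by (rule F_meas[OF H_kernel])
  note Fc[measurable] = Fgen_comp[OF Fm]
  note [measurable] = a_meas b_meas \<pi>\<gamma>_meas \<pi>\<delta>_meas Gamma_meas Delta_meas
  define h where "h = (\<lambda>\<gamma>. min (a \<gamma>) (b \<gamma>))"
  define Hm where "Hm = (\<lambda>\<gamma>. max (a \<gamma>) (b \<gamma>))"
  have hm[measurable]: "h \<in> borel_measurable borel" unfolding h_def by measurable
  have Hmm[measurable]: "Hm \<in> borel_measurable borel" unfolding Hm_def by measurable
  have hpos: "\<And>\<gamma>. \<gamma> \<in> \<Gamma> \<Longrightarrow> h \<gamma> > 0" unfolding h_def using a_pos b_pos by simp
  have Hpos: "\<And>\<gamma>. \<gamma> \<in> \<Gamma> \<Longrightarrow> Hm \<gamma> > 0" unfolding Hm_def using a_pos b_pos by (simp add: less_max_iff_disj)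
  let ?S = "sym_posterior_mass F n x y q \<Delta> \<pi>\<delta>"
  let ?TP = "tp_posterior_mass F a b n x y q \<Delta> \<pi>\<delta> \<Gamma> \<pi>\<gamma>"
  let ?T = "\<lambda>\<beta> \<sigma> \<delta> \<gamma>. (\<Prod>j<n. tp_density F a b 0 \<sigma> \<delta> \<gamma> (y j - x j \<bullet> \<beta>)) * ennreal (\<pi>\<gamma> \<gamma>)
        * ennreal (\<pi>\<delta> \<delta>) * ennreal (\<sigma> powr -q) * indicator {0<..} \<sigma> * indicator \<Delta> \<delta> * indicator \<Gamma> \<gamma>"
  let ?B = "\<lambda>c \<beta> \<sigma> \<delta> \<gamma>. (\<Prod>j<n. ennreal (2/(\<sigma>*(a \<gamma>+b \<gamma>))) * F ((y j - x j \<bullet> \<beta>)/(\<sigma> * c \<gamma>)) \<delta>) * ennreal (\<pi>\<gamma> \<gamma>)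
        * ennreal (\<pi>\<delta> \<delta>) * ennreal (\<sigma> powr -q) * indicator {0<..} \<sigma> * indicator \<Delta> \<delta> * indicator \<Gamma> \<gamma>"
  let ?I = "\<lambda>c. (\<integral>\<^sup>+\<gamma>\<in>\<Gamma>. ennreal (c \<gamma> powr (real n + q - 1) / (a \<gamma> + b \<gamma>) ^ n * \<pi>\<gamma> \<gamma>) \<partial>lborel)"
  have tp_eq: "?TP = (\<integral>\<^sup>+\<beta>. \<integral>\<^sup>+\<sigma>. \<integral>\<^sup>+\<delta>. \<integral>\<^sup>+\<gamma>. ?T \<beta> \<sigma> \<delta> \<gamma> \<partial>lborel \<partial>lborel \<partial>lborel \<partial>lborel)"
    unfolding tp_posterior_mass_def
    by (rule setint4) (unfold tp_density_def, measurable)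
  have Ceq: "(\<integral>\<^sup>+\<gamma>. ennreal ((2*c \<gamma>/(a \<gamma>+b \<gamma>))^n * c \<gamma> powr q * \<pi>\<gamma> \<gamma> / c \<gamma>) * indicator \<Gamma> \<gamma> \<partial>lborel)
      = 2^n * ?I c" if cpos: "\<And>\<gamma>. \<gamma> \<in> \<Gamma> \<Longrightarrow> c \<gamma> > 0" and [measurable]: "c \<in> borel_measurable borel" for c
  proof -
    have "(\<integral>\<^sup>+\<gamma>. ennreal ((2*c \<gamma>/(a \<gamma>+b \<gamma>))^n * c \<gamma> powr q * \<pi>\<gamma> \<gamma> / c \<gamma>) * indicator \<Gamma> \<gamma> \<partial>lborel)
       = (\<integral>\<^sup>+\<gamma>. 2^n * (ennreal (c \<gamma> powr (real n + q - 1) / (a \<gamma> + b \<gamma>) ^ n * \<pi>\<gamma> \<gamma>) * indicator \<Gamma> \<gamma>) \<partial>lborel)"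
    proof (rule nn_integral_cong)
      fix \<gamma> :: real
      show "ennreal ((2*c \<gamma>/(a \<gamma>+b \<gamma>))^n * c \<gamma> powr q * \<pi>\<gamma> \<gamma> / c \<gamma>) * indicator \<Gamma> \<gamma>
         = 2^n * (ennreal (c \<gamma> powr (real n + q - 1) / (a \<gamma> + b \<gamma>) ^ n * \<pi>\<gamma> \<gamma>) * indicator \<Gamma> \<gamma>)"
      proof (cases "\<gamma> \<in> \<Gamma>")
        case True
        have "a \<gamma> + b \<gamma> > 0" using a_pos[OF True] b_pos[OF True] by simp
        from const_eq[OF cpos[OF True] this \<pi>\<gamma>_nonneg[of \<gamma>], of n q] True show ?thesis by simp
      qed simp
    qed
    also have "\<dots> = 2^n * ?I c"
      by (rule nn_integral_cmult) measurable
    finally show ?thesis .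
  qed
  have scale_h: "(\<integral>\<^sup>+\<beta>. \<integral>\<^sup>+\<sigma>. \<integral>\<^sup>+\<delta>. \<integral>\<^sup>+\<gamma>. ?B h \<beta> \<sigma> \<delta> \<gamma> \<partial>lborel \<partial>lborel \<partial>lborel \<partial>lborel) = 2^n * ?I h * ?S"
  proof -
    have "(\<integral>\<^sup>+\<beta>. \<integral>\<^sup>+\<sigma>. \<integral>\<^sup>+\<delta>. \<integral>\<^sup>+\<gamma>. ?B h \<beta> \<sigma> \<delta> \<gamma> \<partial>lborel \<partial>lborel \<partial>lborel \<partial>lborel)
      = (\<integral>\<^sup>+\<gamma>. ennreal ((2*h \<gamma>/(a \<gamma>+b \<gamma>))^n * h \<gamma> powr q * \<pi>\<gamma> \<gamma> / h \<gamma>) * indicator \<Gamma> \<gamma> \<partial>lborel) * ?S"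
      by (rule scale[OF Fm a_meas b_meas hm \<pi>\<gamma>_meas \<pi>\<delta>_meas Gamma_meas Delta_meas a_pos b_pos hpos \<pi>\<gamma>_nonneg])
    also have "(\<integral>\<^sup>+\<gamma>. ennreal ((2*h \<gamma>/(a \<gamma>+b \<gamma>))^n * h \<gamma> powr q * \<pi>\<gamma> \<gamma> / h \<gamma>) * indicator \<Gamma> \<gamma> \<partial>lborel) = 2^n * ?I h"
      by (rule Ceq[OF hpos hm])
    finally show ?thesis .
  qed
  have scale_H: "(\<integral>\<^sup>+\<beta>. \<integral>\<^sup>+\<sigma>. \<integral>\<^sup>+\<delta>. \<integral>\<^sup>+\<gamma>. ?B Hm \<beta> \<sigma> \<delta> \<gamma> \<partial>lborel \<partial>lborel \<partial>lborel \<partial>lborel) = 2^n * ?I Hm * ?S"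
  proof -
    have "(\<integral>\<^sup>+\<beta>. \<integral>\<^sup>+\<sigma>. \<integral>\<^sup>+\<delta>. \<integral>\<^sup>+\<gamma>. ?B Hm \<beta> \<sigma> \<delta> \<gamma> \<partial>lborel \<partial>lborel \<partial>lborel \<partial>lborel)
      = (\<integral>\<^sup>+\<gamma>. ennreal ((2*Hm \<gamma>/(a \<gamma>+b \<gamma>))^n * Hm \<gamma> powr q * \<pi>\<gamma> \<gamma> / Hm \<gamma>) * indicator \<Gamma> \<gamma> \<partial>lborel) * ?S"
      by (rule scale[OF Fm a_meas b_meas Hmm \<pi>\<gamma>_meas \<pi>\<delta>_meas Gamma_meas Delta_meas a_pos b_pos Hpos \<pi>\<gamma>_nonneg])
    also have "(\<integral>\<^sup>+\<gamma>. ennreal ((2*Hm \<gamma>/(a \<gamma>+b \<gamma>))^n * Hm \<gamma> powr q * \<pi>\<gamma> \<gamma> / Hm \<gamma>) * indicator \<Gamma> \<gamma> \<partial>lborel) = 2^n * ?I Hm"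
      by (rule Ceq[OF Hpos Hmm])
    finally show ?thesis .
  qed
  have low: "?B h \<beta> \<sigma> \<delta> \<gamma> \<le> ?T \<beta> \<sigma> \<delta> \<gamma>" for \<beta> \<sigma> \<delta> \<gamma>
  proof (cases "\<sigma> > 0 \<and> \<gamma> \<in> \<Gamma>")
    case True
    have "(\<Prod>j<n. ennreal (2/(\<sigma>*(a \<gamma>+b \<gamma>))) * F ((y j - x j \<bullet> \<beta>)/(\<sigma> * h \<gamma>)) \<delta>) \<le> (\<Prod>j<n. tp_density F a b 0 \<sigma> \<delta> \<gamma> (y j - x j \<bullet> \<beta>))"
    proof (rule prod_mono_ennreal)
      fix j
      from tp_bounds(1)[where \<sigma>=\<sigma> and a\<gamma>="a \<gamma>" and b\<gamma>="b \<gamma>" and H=H and z="y j - x j \<bullet> \<beta>" and \<delta>=\<delta> and \<gamma>=\<gamma>] True a_pos b_pos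
      show "ennreal (2/(\<sigma>*(a \<gamma>+b \<gamma>))) * F ((y j - x j \<bullet> \<beta>)/(\<sigma> * h \<gamma>)) \<delta> \<le> tp_density F a b 0 \<sigma> \<delta> \<gamma> (y j - x j \<bullet> \<beta>)"
        unfolding F_def h_def by (simp add: tp_density_def)
    qed
    then show ?thesis by (intro mult_right_mono) auto
  qed auto
  have up: "?T \<beta> \<sigma> \<delta> \<gamma> \<le> ?B Hm \<beta> \<sigma> \<delta> \<gamma>" for \<beta> \<sigma> \<delta> \<gamma>
  proof (cases "\<sigma> > 0 \<and> \<gamma> \<in> \<Gamma>")
    case True
    have "(\<Prod>j<n. tp_density F a b 0 \<sigma> \<delta> \<gamma> (y j - x j \<bullet> \<beta>)) \<le> (\<Prod>j<n. ennreal (2/(\<sigma>*(a \<gamma>+b \<gamma>))) * F ((y j - x j \<bullet> \<beta>)/(\<sigma> * Hm \<gamma>)) \<delta>)"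
    proof (rule prod_mono_ennreal)
      fix j
      from tp_bounds(2)[where \<sigma>=\<sigma> and a\<gamma>="a \<gamma>" and b\<gamma>="b \<gamma>" and H=H and z="y j - x j \<bullet> \<beta>" and \<delta>=\<delta> and \<gamma>=\<gamma>] True a_pos b_pos
      show "tp_density F a b 0 \<sigma> \<delta> \<gamma> (y j - x j \<bullet> \<beta>) \<le> ennreal (2/(\<sigma>*(a \<gamma>+b \<gamma>))) * F ((y j - x j \<bullet> \<beta>)/(\<sigma> * Hm \<gamma>)) \<delta>"
        unfolding F_def Hm_def by (simp add: tp_density_def)
    qed
    then show ?thesis by (intro mult_right_mono) auto
  qed auto
  have lowI: "2^n * ?I h * ?S \<le> ?TP"
    unfolding tp_eq scale_h[symmetric] by (intro nn_integral_mono low)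
  have upI: "?TP \<le> 2^n * ?I Hm * ?S"
    unfolding tp_eq scale_H[symmetric] by (intro nn_integral_mono up)
  have Ipos: "?I h > 0"
  proof (rule pos_int2[where g = "\<lambda>\<gamma>. ennreal (\<pi>\<gamma> \<gamma>) * indicator \<Gamma> \<gamma>"])
    show "(\<lambda>\<gamma>. ennreal (\<pi>\<gamma> \<gamma>) * indicator \<Gamma> \<gamma>) \<in> borel_measurable lborel" by measurable
    show "(\<lambda>\<gamma>. ennreal (h \<gamma> powr (real n + q - 1) / (a \<gamma> + b \<gamma>) ^ n * \<pi>\<gamma> \<gamma>) * indicator \<Gamma> \<gamma>) \<in> borel_measurable lborel"
      by measurable
    show "(\<integral>\<^sup>+\<gamma>. ennreal (\<pi>\<gamma> \<gamma>) * indicator \<Gamma> \<gamma> \<partial>lborel) \<noteq> 0" using \<pi>\<gamma>_proper by simp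
    fix \<gamma> assume g: "ennreal (\<pi>\<gamma> \<gamma>) * indicator \<Gamma> \<gamma> \<noteq> 0"
    then have G: "\<gamma> \<in> \<Gamma>" and p: "\<pi>\<gamma> \<gamma> > 0" by (auto simp: indicator_def ennreal_eq_0_iff not_le split: if_splits)
    have "h \<gamma> powr (real n + q - 1) / (a \<gamma> + b \<gamma>) ^ n * \<pi>\<gamma> \<gamma> > 0"
      using hpos[OF G] a_pos[OF G] b_pos[OF G] p by simp
    then show "ennreal (h \<gamma> powr (real n + q - 1) / (a \<gamma> + b \<gamma>) ^ n * \<pi>\<gamma> \<gamma>) * indicator \<Gamma> \<gamma> \<noteq> 0"
      using G by (simp only: indicator_simps mult_1_right ennreal_eq_0_iff not_le)
  qed
  have dpos: "(\<integral>\<^sup>+\<delta>\<in>\<Delta>. (\<Prod>j<n. ennreal (1 / \<sigma>) * F ((y j - x j \<bullet> \<beta>) / \<sigma>) \<delta>) *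
        ennreal (\<pi>\<delta> \<delta>) * ennreal (\<sigma> powr (- q)) \<partial>lborel) > 0" if s: "\<sigma> > 0" for \<sigma> \<beta>
  proof (rule pos_int2[where g = "\<lambda>\<delta>. ennreal (\<pi>\<delta> \<delta>) * indicator \<Delta> \<delta>"])
    show "(\<lambda>\<delta>. ennreal (\<pi>\<delta> \<delta>) * indicator \<Delta> \<delta>) \<in> borel_measurable lborel" by measurable
    show "(\<lambda>\<delta>. (\<Prod>j<n. ennreal (1 / \<sigma>) * F ((y j - x j \<bullet> \<beta>) / \<sigma>) \<delta>) *
        ennreal (\<pi>\<delta> \<delta>) * ennreal (\<sigma> powr (- q)) * indicator \<Delta> \<delta>) \<in> borel_measurable lborel"
      by measurable
    show "(\<integral>\<^sup>+\<delta>. ennreal (\<pi>\<delta> \<delta>) * indicator \<Delta> \<delta> \<partial>lborel) \<noteq> 0" using \<pi>\<delta>_proper by simp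
    fix \<delta> assume g: "ennreal (\<pi>\<delta> \<delta>) * indicator \<Delta> \<delta> \<noteq> 0"
    then have D: "\<delta> \<in> \<Delta>" and p: "\<pi>\<delta> \<delta> > 0" by (auto simp: indicator_def ennreal_eq_0_iff not_le split: if_splits)
    have Fp: "F z \<delta> \<noteq> 0" for z
      using smn_pos[OF H_kernel H_pos[OF D], of z] unfolding F_def by simp
    show "(\<Prod>j<n. ennreal (1 / \<sigma>) * F ((y j - x j \<bullet> \<beta>) / \<sigma>) \<delta>) *
        ennreal (\<pi>\<delta> \<delta>) * ennreal (\<sigma> powr (- q)) * indicator \<Delta> \<delta> \<noteq> 0"
      using D p s Fp by simp
  qed
  have Spos: "?S > 0"
    unfolding sym_posterior_mass_def
  proof (rule pos_int2[where g = "\<lambda>_. 1"])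
    show "(\<lambda>_. 1::ennreal) \<in> borel_measurable lborel" by simp
    show "(\<lambda>\<beta>. \<integral>\<^sup>+\<sigma>\<in>{0<..}. (\<integral>\<^sup>+\<delta>\<in>\<Delta>. (\<Prod>j<n. ennreal (1 / \<sigma>) * F ((y j - x j \<bullet> \<beta>) / \<sigma>) \<delta>) *
        ennreal (\<pi>\<delta> \<delta>) * ennreal (\<sigma> powr (- q)) \<partial>lborel) \<partial>lborel) \<in> borel_measurable lborel"
      by measurable
    show "(\<integral>\<^sup>+\<beta>. (1::ennreal) \<partial>(lborel :: (real ^ 'p) measure)) \<noteq> 0" by simp
    fix \<beta> :: "real ^ 'p"
    show "(\<integral>\<^sup>+\<sigma>\<in>{0<..}. (\<integral>\<^sup>+\<delta>\<in>\<Delta>. (\<Prod>j<n. ennreal (1 / \<sigma>) * F ((y j - x j \<bullet> \<beta>) / \<sigma>) \<delta>) *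
        ennreal (\<pi>\<delta> \<delta>) * ennreal (\<sigma> powr (- q)) \<partial>lborel) \<partial>lborel) \<noteq> 0"
    proof -
      have "(\<integral>\<^sup>+\<sigma>\<in>{0<..}. (\<integral>\<^sup>+\<delta>\<in>\<Delta>. (\<Prod>j<n. ennreal (1 / \<sigma>) * F ((y j - x j \<bullet> \<beta>) / \<sigma>) \<delta>) *
        ennreal (\<pi>\<delta> \<delta>) * ennreal (\<sigma> powr (- q)) \<partial>lborel) \<partial>lborel) > 0"
      proof (rule pos_int2[where g = "indicator {0<..<1}"])
        show "(indicator {0<..<1} :: real \<Rightarrow> ennreal) \<in> borel_measurable lborel" by measurable
        show "(\<lambda>\<sigma>. (\<integral>\<^sup>+\<delta>\<in>\<Delta>. (\<Prod>j<n. ennreal (1 / \<sigma>) * F ((y j - x j \<bullet> \<beta>) / \<sigma>) \<delta>) *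
          ennreal (\<pi>\<delta> \<delta>) * ennreal (\<sigma> powr (- q)) \<partial>lborel) * indicator {0<..} \<sigma>) \<in> borel_measurable lborel"
          by measurable
        show "(\<integral>\<^sup>+\<sigma>. (indicator {0<..<1::real} \<sigma> :: ennreal) \<partial>lborel) \<noteq> 0"
          by (subst nn_integral_indicator) auto
        fix \<sigma> :: real assume "(indicator {0<..<1} \<sigma> :: ennreal) \<noteq> 0"
        then have s: "\<sigma> > 0" by (auto simp: indicator_def ennreal_eq_0_iff not_le split: if_splits)
        show "(\<integral>\<^sup>+\<delta>\<in>\<Delta>. (\<Prod>j<n. ennreal (1 / \<sigma>) * F ((y j - x j \<bullet> \<beta>) / \<sigma>) \<delta>) *
          ennreal (\<pi>\<delta> \<delta>) * ennreal (\<sigma> powr (- q)) \<partial>lborel) * indicator {0<..} \<sigma> \<noteq> 0"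
          using dpos[OF s, of \<beta>] s by simp
      qed
      then show ?thesis by simp
    qed
  qed
  have "?TP < \<infinity> \<longrightarrow> ?S < \<infinity> \<and> ?I h < \<infinity>"
  proof
    assume "?TP < \<infinity>"
    with lowI have "2^n * ?I h * ?S < top" by (simp add: top_ennreal.rep_eq le_less_trans)
    with Ipos Spos show "?S < \<infinity> \<and> ?I h < \<infinity>"
      by (auto simp add: ennreal_mult_less_top)
  qed
  moreover have "?S < \<infinity> \<and> ?I Hm < \<infinity> \<longrightarrow> ?TP < \<infinity>"
  proof
    assume "?S < \<infinity> \<and> ?I Hm < \<infinity>"
    then have "2^n * ?I Hm * ?S < top" by (simp add: ennreal_mult_less_top power_less_top_ennreal)
    with upI show "?TP < \<infinity>" by (simp add: le_less_trans)
  qed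
  ultimately show ?thesis unfolding F_def h_def Hm_def by blast
qed


end
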